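(* There exist $\Delta q>0$, $\mu\in\mathbb R$, $\sigma>0$ and $0\le a<b\le\infty$ such that, for $\Lambda$ distributed as $\mathcal N(\mu,\sigma^2)$ truncated to $[a,b]$, one has $e^{\epsilon_{N^T}}=\frac{\mathbb E(\Lambda)}{M'_\Lambda(-\Delta q)}<M_\Lambda(\Delta q)$.
   Context: The truncated Gaussian on $[a,b]$ has density $\frac{\phi((x-\mu)/\sigma)}{\sigma(\Phi(\frac{b-\mu}{\sigma})-\Phi(\frac{a-\mu}{\sigma}))}$ for $a\le x\le b$ and $0$ otherwise, with $\phi,\Phi$ the standard normal density and CDF. $M_\Lambda(t)=\mathbb E[e^{t\Lambda}]$ and $M'_\Lambda(t)=\mathbb E[\Lambda e^{t\Lambda}]$. *)

theory Defs
  imports "HOL-Probability.Probability"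
begin

text \<open>Standard normal CDF, extended to the extended reals (so that \<Phi>(\<infinity>) = 1).\<close>
definition std_normal_cdf :: "ereal \<Rightarrow> real" where
  "std_normal_cdf z = (LINT t|lborel. indicator {t. ereal t \<le> z} t * std_normal_density t)"

definition trunc_gauss_density :: "real \<Rightarrow> real \<Rightarrow> real \<Rightarrow> ereal \<Rightarrow> real \<Rightarrow> real" where
  "trunc_gauss_density mu sg a b x =
     (if a \<le> x \<and> ereal x \<le> b then
        std_normal_density ((x - mu) / sg) /
        (sg * (std_normal_cdf ((b - ereal mu) / ereal sg) - std_normal_cdf (ereal ((a - mu) / sg))))
      else 0)"

definition tg_expect :: "real \<Rightarrow> real \<Rightarrow> real \<Rightarrow> ereal \<Rightarrow> (real \<Rightarrow> real) \<Rightarrow> real" where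
  "tg_expect mu sg a b f = (LINT x|lborel. trunc_gauss_density mu sg a b x * f x)"

definition tg_mgf :: "real \<Rightarrow> real \<Rightarrow> real \<Rightarrow> ereal \<Rightarrow> real \<Rightarrow> real" where
  "tg_mgf mu sg a b t = tg_expect mu sg a b (\<lambda>x. exp (t * x))"

definition tg_mgf_deriv :: "real \<Rightarrow> real \<Rightarrow> real \<Rightarrow> ereal \<Rightarrow> real \<Rightarrow> real" where
  "tg_mgf_deriv mu sg a b t = tg_expect mu sg a b (\<lambda>x. x * exp (t * x))"

end

theory Submission imports Defs begin

lemma pos_int:
  fixes k :: "real \<Rightarrow> real"
  assumes "integrable lborel k" "\<And>x. 0 \<le> k x" "\<And>x. x > c \<Longrightarrow> k x > 0"
  shows "integral\<^sup>L lborel k > 0"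
proof (rule ccontr)
  assume "\<not> integral\<^sup>L lborel k > 0"
  moreover have "integral\<^sup>L lborel k \<ge> 0" using assms(2) by (simp add: integral_nonneg)
  ultimately have "integral\<^sup>L lborel k = 0" by simp
  hence "AE x in lborel. k x = 0"
    using integral_nonneg_eq_0_iff_AE[of lborel k] assms by auto
  hence "AE x in lborel. x \<le> c" proof eventually_elim
    fix x assume "k x = 0" thus "x \<le> c" using assms(3)[of x] by (cases "x > c") auto
  qed
  hence "AE x in lborel. x \<notin> {c<..c+1}" by eventually_elim auto
  hence "emeasure lborel {c<..c+1} = 0"
    by (subst (asm) AE_iff_measurable[of "{c<..c+1}"]) auto
  thus False by simp
qed

lemma i_exp: "integrable lborel (\<lambda>x. std_normal_density x * exp x)"
proof -
  have "std_normal_density x * exp x = exp (1/2) * normal_density 1 1 x" for x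
    by (simp add: normal_density_def field_simps power2_eq_square flip: exp_add)
  thus ?thesis by simp
qed

lemma i_mom: "integrable lborel (\<lambda>x. std_normal_density x * x)"
  using integrable_std_normal_moment[of 1] by simp

lemma g_bound: "x \<ge> (1::real) \<Longrightarrow> 0 \<le> x * exp (-x) \<and> x * exp (-x) \<le> 1"
proof -
  assume "x \<ge> 1"
  have "x \<le> exp x" using exp_ge_add_one_self[of x] by linarith
  thus ?thesis using \<open>x \<ge> 1\<close> by (simp add: exp_minus field_simps)
qed

lemma g_strict: "1 \<le> y \<Longrightarrow> y < (x::real) \<Longrightarrow> x * exp (-x) < y * exp (-y)"
proof -
  assume a: "1 \<le> y" "y < x"
  have q: "(x-y)^2/2 > 0" using a by simp
  have e: "exp (x - y) > 1 + (x - y)" using exp_lower_Taylor_quadratic[of "x-y"] a q by linarith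
  have "y * (1 + (x - y)) < y * exp (x - y)" using e a by simp
  moreover have "x \<le> y * (1 + (x - y))"
  proof -
    have "y * (1 + (x - y)) - x = (y - 1) * (x - y)" by (simp add: algebra_simps)
    moreover have "(y - 1) * (x - y) \<ge> 0" using a by simp
    ultimately show ?thesis by linarith
  qed
  ultimately have "x < y * exp (x - y)" by linarith
  hence "x * exp (-x) < y * exp (x - y) * exp (-x)" by simp
  also have "\<dots> = y * exp (-y)" by (simp add: mult.assoc flip: exp_add)
  finally show ?thesis .
qed

lemma g_pt: "\<bar>std_normal_density x * (x * exp (-x)) * indicator {1..} x\<bar> \<le> std_normal_density (x::real)"
proof (cases "x \<ge> 1")
  case True with g_bound[OF True] show ?thesis
    by (simp add: abs_mult mult_left_le)
qed (simp add: indicator_def)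

lemma i_g: "integrable lborel (\<lambda>x. std_normal_density x * (x * exp (-x)) * indicator {1..} x)"
proof -
  have i0: "integrable lborel std_normal_density" by simp
  show ?thesis
  by (rule Bochner_Integration.integrable_bound[OF i0])
     (auto intro!: AE_I2 g_pt)
qed

theorem mainTheorem14:
  shows "\<exists>dq mu sg (a::real) (b::ereal).
           dq > 0 \<and> sg > 0 \<and> 0 \<le> a \<and> ereal a < b \<and>
           tg_expect mu sg a b (\<lambda>x. x) / tg_mgf_deriv mu sg a b (- dq)
             < tg_mgf mu sg a b dq"
proof -
  let ?P = "std_normal_density"
  let ?i = "indicator {1..} :: real \<Rightarrow> real"
  define Z where "Z = std_normal_cdf \<infinity> - std_normal_cdf (ereal 1)"
  define W where "W = (LINT x|lborel. ?P x * ?i x)"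
  define Ef where "Ef = (LINT x|lborel. ?P x * x * ?i x)"
  define Eg where "Eg = (LINT x|lborel. ?P x * (x * exp (-x)) * ?i x)"
  define Eh where "Eh = (LINT x|lborel. ?P x * exp x * ?i x)"
  have iW: "integrable lborel (\<lambda>x. ?P x * ?i x)"
    by (rule integrable_real_mult_indicator) auto
  have iF: "integrable lborel (\<lambda>x. ?P x * x * ?i x)"
    by (rule integrable_real_mult_indicator) (auto intro: i_mom)
  have iH: "integrable lborel (\<lambda>x. ?P x * exp x * ?i x)"
    by (rule integrable_real_mult_indicator) (auto intro: i_exp)
  have iG: "integrable lborel (\<lambda>x. ?P x * (x * exp (-x)) * ?i x)" by (rule i_g)
  have cinf: "std_normal_cdf \<infinity> = 1"
    unfolding std_normal_cdf_def by simp
  have c1: "std_normal_cdf (ereal 1) = (LINT t|lborel. indicator {..1} t * ?P t)"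
    unfolding std_normal_cdf_def by (rule Bochner_Integration.integral_cong) (auto simp: indicator_def)
  have i1: "integrable lborel (\<lambda>t. indicator {..1} t * ?P t)"
    using integrable_real_mult_indicator[of "{..1}" lborel ?P] by (simp add: mult.commute)
  have "Z = (LINT t|lborel. ?P t - indicator {..1} t * ?P t)"
  proof -
    have "(LINT t|lborel. ?P t - indicator {..1} t * ?P t) = (LINT t|lborel. ?P t) - (LINT t|lborel. indicator {..1} t * ?P t)"
      by (rule Bochner_Integration.integral_diff) (use i1 in auto)
    thus ?thesis unfolding Z_def cinf c1 by simp
  qed
  also have "\<dots> = (LINT t|lborel. ?P t * indicator {1<..} t)"
    by (rule Bochner_Integration.integral_cong) (auto simp: indicator_def)
  finally have Zeq: "Z = (LINT t|lborel. ?P t * indicator {1<..} t)" .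
  have iZ: "integrable lborel (\<lambda>t. ?P t * indicator {1<..} t)"
    by (rule integrable_real_mult_indicator) auto
  have Zpos: "Z > 0" unfolding Zeq
    by (rule pos_int[OF iZ, of 1]) (auto simp: indicator_def normal_density_pos)
  have ZW: "Z \<le> W" unfolding Zeq W_def
    by (rule integral_mono[OF iZ iW]) (auto simp: indicator_def)
  have Wpos: "W > 0" using Zpos ZW by linarith
  have Efpos: "Ef > 0" unfolding Ef_def
    by (rule pos_int[OF iF, of 1]) (auto simp: indicator_def normal_density_pos)
  have Egpos: "Eg > 0" unfolding Eg_def
    by (rule pos_int[OF iG, of 1]) (auto simp: indicator_def normal_density_pos)
  have Ehpos: "Eh > 0" unfolding Eh_def
    by (rule pos_int[OF iH, of 1]) (auto simp: indicator_def normal_density_pos)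
  have "exp 1 * W = (LINT x|lborel. exp 1 * (?P x * ?i x))" unfolding W_def by simp
  also have "\<dots> \<le> Eh" unfolding Eh_def
  proof (rule integral_mono)
    fix x :: real
    have "exp 1 * ?P x \<le> ?P x * exp x" if "1 \<le> x"
      using mult_right_mono[of "exp 1" "exp x" "?P x"] that by (simp add: mult.commute)
    thus "exp 1 * (?P x * ?i x) \<le> ?P x * exp x * ?i x" by (simp add: indicator_def)
  qed (use iW iH in auto)
  finally have Eh1: "exp 1 * W \<le> Eh" .
  define m where "m = ln (Eh / W)"
  have em: "exp m = Eh / W" unfolding m_def using Ehpos Wpos by simp
  have m1: "m \<ge> 1"
  proof -
    have "W * exp m = Eh" using em Wpos by simp
    hence "W * exp 1 \<le> W * exp m" using Eh1 by (simp add: mult.commute)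
    hence "exp 1 \<le> exp m" using Wpos by (simp add: mult_le_cancel_left_pos)
    thus ?thesis by simp
  qed
  define gm where "gm = m * exp (-m)"
  define k where "k = (\<lambda>x. - (?P x * ?i x * (x * exp (-x) - gm) * (exp x - exp m)))"
  have keq: "k = (\<lambda>x. (exp m * (?P x * (x * exp (-x)) * ?i x) - ?P x * x * ?i x)
                    + (gm * (?P x * exp x * ?i x) - (gm * exp m) * (?P x * ?i x)))"
  proof
    fix x
    have "exp (-x) * exp x = (1::real)" by (metis exp_add add.left_inverse exp_zero)
    hence "x * exp (-x) * exp x = x" by (simp add: mult.assoc)
    thus "k x = (exp m * (?P x * (x * exp (-x)) * ?i x) - ?P x * x * ?i x)
                    + (gm * (?P x * exp x * ?i x) - (gm * exp m) * (?P x * ?i x))"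
      unfolding k_def by (simp add: algebra_simps) (metis mult.assoc mult.left_commute)
  qed
  have ik: "integrable lborel k" unfolding keq using iW iF iG iH by auto
  have intk: "integral\<^sup>L lborel k = exp m * Eg - Ef + (gm * Eh - gm * exp m * W)"
    unfolding keq Ef_def Eg_def Eh_def W_def using iW iF iG iH by simp
  have "integral\<^sup>L lborel k > 0"
  proof (rule pos_int[OF ik, of m])
    fix x :: real
    show "0 \<le> k x"
    proof (cases "x \<ge> 1")
      case True
      have "(x * exp (-x) - gm) * (exp x - exp m) \<le> 0"
      proof (cases x m rule: linorder_cases)
        case less
        have "m * exp (-m) < x * exp (-x)" using g_strict[OF True less] .
        moreover have "exp x < exp m" using less by simp
        ultimately show ?thesis unfolding gm_def by (intro mult_nonneg_nonpos) auto
      next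
        case greater
        have "x * exp (-x) < m * exp (-m)" using g_strict[OF m1 greater] .
        moreover have "exp x > exp m" using greater by simp
        ultimately show ?thesis unfolding gm_def by (intro mult_nonpos_nonneg) auto
      qed (simp add: gm_def)
      hence "0 \<le> ?P x * ?i x * (- ((x * exp (-x) - gm) * (exp x - exp m)))"
        by (intro mult_nonneg_nonneg) auto
      thus ?thesis unfolding k_def by (simp add: algebra_simps)
    qed (simp add: k_def indicator_def)
  next
    fix x :: real assume "x > m"
    hence x1: "x \<ge> 1" using m1 by simp
    have "x * exp (-x) < m * exp (-m)" using g_strict[OF m1 \<open>x > m\<close>] .
    moreover have "exp x > exp m" using \<open>x > m\<close> by simp
    ultimately have "(x * exp (-x) - gm) * (exp x - exp m) < 0" unfolding gm_def
      by (intro mult_neg_pos) auto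
    hence "0 < ?P x * ?i x * (- ((x * exp (-x) - gm) * (exp x - exp m)))"
      using x1 by (intro mult_pos_pos) (auto simp: normal_density_pos)
    thus "0 < k x" unfolding k_def by (simp add: algebra_simps)
  qed
  moreover have "gm * exp m * W = gm * Eh" using em Wpos by simp
  ultimately have "Ef < exp m * Eg" using intk by simp
  hence "W * Ef < Eh * Eg" using em Wpos by (simp add: field_simps)
  moreover have "Z * Ef \<le> W * Ef" using ZW Efpos by simp
  ultimately have key: "Z * Ef < Eh * Eg" by linarith
  have dens: "trunc_gauss_density 0 1 1 \<infinity> x = ?P x * ?i x / Z" for x
    unfolding trunc_gauss_density_def Z_def by (simp add: indicator_def)
  have ex: "tg_expect 0 1 1 \<infinity> f = (LINT x|lborel. ?P x * f x * ?i x) / Z" for f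
    unfolding tg_expect_def dens
    by (subst integral_divide_zero[symmetric]) (rule Bochner_Integration.integral_cong, auto simp: indicator_def)
  have "tg_expect 0 1 1 \<infinity> (\<lambda>x. x) / tg_mgf_deriv 0 1 1 \<infinity> (- 1) < tg_mgf 0 1 1 \<infinity> 1"
    unfolding tg_mgf_def tg_mgf_deriv_def ex
    using key Zpos Egpos Efpos unfolding Ef_def[symmetric] Eg_def Eh_def
    by (simp add: field_simps)
  thus ?thesis by (intro exI[of _ 1] exI[of _ 0] exI[of _ 1] exI[of _ 1] exI[of _ \<infinity>]) auto
qed

end
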